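(* Let $k\ge 2$ and let $K_{n_1,\ldots,n_k}$ be the complete $k$-partite graph with parts $V_1,\ldots,V_k$, where $n_1=|V_1|\ge n_2=|V_2|\ge\cdots\ge n_k=|V_k|\ge 1$. Then $$\omega(\mathrm{CUT}(K_{n_1,n_2,\ldots,n_k}))\ge 2^{n_2-1}.$$
   Context: For an undirected graph $G=(V,E)$ and $S\subseteq V$, $\delta(S)\subseteq E$ denotes the set of edges with exactly one endpoint in $S$, and $\mathbf v(S)\in\{0,1\}^{E}$ is its incidence vector ($v(S)_e=1$ iff $e\in\delta(S)$). The cut polytope is $\mathrm{CUT}(G)=\operatorname{conv}\{\mathbf v(S):S\subseteq V\}\subset\mathbb R^{E}$. The 1-skeleton of a polytope is the graph whose vertices are the polytope's vertices and whose edges are its one-dimensional faces; $\omega$ denotes its clique number. *)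

theory Defs
  imports "HOL-Analysis.Analysis"
begin

definition kpartite_edge :: "nat \<Rightarrow> (nat \<Rightarrow> 'v set) \<Rightarrow> 'v \<Rightarrow> 'v \<Rightarrow> bool" where
  "kpartite_edge k V u w \<longleftrightarrow>
     (\<exists>i\<in>{1..k}. \<exists>j\<in>{1..k}. i \<noteq> j \<and> u \<in> V i \<and> w \<in> V j)"

text \<open>The space R^E is realised inside
  R^('v x 'v): the coordinate (u,w) is used iff uw is an edge (both orientations carry
  the same value), all other coordinates are 0. This is an injective linear image of R^E,
  so the face structure of the polytope is unchanged.\<close>
definition cut_vec :: "('v \<Rightarrow> 'v \<Rightarrow> bool) \<Rightarrow> 'v set \<Rightarrow> real ^ ('v::finite \<times> 'v)" where
  "cut_vec E S = (\<chi> p. if E (fst p) (snd p) \<and> (fst p \<in> S \<longleftrightarrow> snd p \<notin> S) then 1 else 0)"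

definition cut_polytope :: "'v set \<Rightarrow> ('v \<Rightarrow> 'v \<Rightarrow> bool) \<Rightarrow> (real ^ ('v::finite \<times> 'v)) set" where
  "cut_polytope Vs E = convex hull {cut_vec E S | S. S \<subseteq> Vs}"

definition skeleton_adjacent :: "'a::euclidean_space set \<Rightarrow> 'a \<Rightarrow> 'a \<Rightarrow> bool" where
  "skeleton_adjacent P x y \<longleftrightarrow>
     x extreme_point_of P \<and> y extreme_point_of P \<and> x \<noteq> y \<and>
     (\<exists>F. F face_of P \<and> aff_dim F = 1 \<and> x \<in> F \<and> y \<in> F)"

definition skeleton_clique :: "'a::euclidean_space set \<Rightarrow> 'a set \<Rightarrow> bool" where
  "skeleton_clique P C \<longleftrightarrow>
     (\<forall>x\<in>C. x extreme_point_of P) \<and>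
     (\<forall>x\<in>C. \<forall>y\<in>C. x \<noteq> y \<longrightarrow> skeleton_adjacent P x y)"

end

theory Submission
  imports Defs
begin

definition sgnfun :: "('v \<Rightarrow> 'v \<Rightarrow> bool) \<Rightarrow> 'v set \<Rightarrow> ('v \<times> 'v) set \<Rightarrow> real ^ ('v::finite \<times> 'v)" where
  "sgnfun E S Q = (\<chi> p. if p \<in> Q then (if cut_vec E S $ p = 1 then 1 else -1) else 0)"

lemma sgn_pw: "sgnfun E S Q $ p * cut_vec E U $ p = sgnfun E S Q $ p * cut_vec E S $ p - (if p\<in>Q then \<bar>cut_vec E U $ p - cut_vec E S $ p\<bar> else 0)"
  unfolding sgnfun_def cut_vec_def by (simp split: if_split)

lemma sgn_inner:
  fixes E :: "'v::finite \<Rightarrow> 'v \<Rightarrow> bool"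
  shows "sgnfun E S Q \<bullet> cut_vec E U = sgnfun E S Q \<bullet> cut_vec E S - (\<Sum>p\<in>Q. \<bar>cut_vec E U $ p - cut_vec E S $ p\<bar>)"
proof -
  have "(\<Sum>p\<in>Q. \<bar>cut_vec E U $ p - cut_vec E S $ p\<bar>) = (\<Sum>p\<in>UNIV. if p\<in>Q then \<bar>cut_vec E U $ p - cut_vec E S $ p\<bar> else 0)"
    using sum.inter_restrict[of UNIV "\<lambda>p. \<bar>cut_vec E U $ p - cut_vec E S $ p\<bar>" Q] by simp
  moreover have "sgnfun E S Q \<bullet> cut_vec E U = (\<Sum>p\<in>UNIV. sgnfun E S Q $ p * cut_vec E S $ p - (if p\<in>Q then \<bar>cut_vec E U $ p - cut_vec E S $ p\<bar> else 0))"
    unfolding inner_vec_def inner_real_def by (rule sum.cong[OF refl sgn_pw])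
  ultimately show ?thesis by (simp add: sum_subtractf inner_vec_def)
qed

lemma sgn_le:
  fixes E :: "'v::finite \<Rightarrow> 'v \<Rightarrow> bool"
  shows "sgnfun E S Q \<bullet> cut_vec E U \<le> sgnfun E S Q \<bullet> cut_vec E S"
    and "sgnfun E S Q \<bullet> cut_vec E U = sgnfun E S Q \<bullet> cut_vec E S \<longleftrightarrow> (\<forall>p\<in>Q. cut_vec E U $ p = cut_vec E S $ p)"
proof -
  have nn: "0 \<le> (\<Sum>p\<in>Q. \<bar>cut_vec E U $ p - cut_vec E S $ p\<bar>)" by (rule sum_nonneg) auto
  show "sgnfun E S Q \<bullet> cut_vec E U \<le> sgnfun E S Q \<bullet> cut_vec E S"
    using nn using sgn_inner[of E S Q U] by linarith
  have "(\<Sum>p\<in>Q. \<bar>cut_vec E U $ p - cut_vec E S $ p\<bar>) = 0 \<longleftrightarrow> (\<forall>p\<in>Q. cut_vec E U $ p = cut_vec E S $ p)"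
    by (subst sum_nonneg_eq_0_iff) auto
  then show "sgnfun E S Q \<bullet> cut_vec E U = sgnfun E S Q \<bullet> cut_vec E S \<longleftrightarrow> (\<forall>p\<in>Q. cut_vec E U $ p = cut_vec E S $ p)"
    using sgn_inner[of E S Q U] by linarith
qed

lemma cut_vec_agree:
  "cut_vec E U $ (u,w) = cut_vec E S $ (u,w) \<longleftrightarrow> (E u w \<longrightarrow> ((u\<in>U \<longleftrightarrow> u\<in>S) \<longleftrightarrow> (w\<in>U \<longleftrightarrow> w\<in>S)))"
  unfolding cut_vec_def by (cases "u\<in>U"; cases "w\<in>U"; cases "u\<in>S"; cases "w\<in>S"; simp)

lemma cut_vec_eq:
  assumes "\<And>u w. E u w \<Longrightarrow> ((u\<in>U \<longleftrightarrow> u\<in>S) \<longleftrightarrow> (w\<in>U \<longleftrightarrow> w\<in>S))"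
  shows "cut_vec E U = cut_vec E S"
  unfolding vec_eq_iff
proof
  fix p :: "'a \<times> 'a"
  obtain u w where p: "p = (u,w)" by fastforce
  show "cut_vec E U $ p = cut_vec E S $ p"
    unfolding p cut_vec_agree using assms[of u w] by blast
qed


lemma face_hull_max:
  fixes X :: "'a::euclidean_space set"
  assumes fin: "finite X" and le: "\<And>x. x\<in>X \<Longrightarrow> c \<bullet> x \<le> m"
  shows "(convex hull X \<inter> {x. c \<bullet> x = m}) face_of convex hull X"
    and "convex hull X \<inter> {x. c \<bullet> x = m} = convex hull {x\<in>X. c \<bullet> x = m}"
proof -
  have sub: "convex hull X \<subseteq> {x. c \<bullet> x \<le> m}"
    using le by (intro hull_minimal) (auto simp: convex_halfspace_le)
  show F: "(convex hull X \<inter> {x. c \<bullet> x = m}) face_of convex hull X"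
    using sub by (intro face_of_Int_supporting_hyperplane_le) auto
  obtain S' where S': "S' \<subseteq> X" "convex hull X \<inter> {x. c \<bullet> x = m} = convex hull S'"
    using face_of_convex_hull_subset[OF finite_imp_compact[OF fin] F] by blast
  have "S' \<subseteq> {x\<in>X. c \<bullet> x = m}"
    using S' hull_subset[of S' convex] by auto
  hence "convex hull S' \<subseteq> convex hull {x\<in>X. c \<bullet> x = m}" by (rule hull_mono)
  moreover have "convex hull {x\<in>X. c \<bullet> x = m} \<subseteq> convex hull X \<inter> {x. c \<bullet> x = m}"
    by (intro hull_minimal) (auto simp: convex_Int convex_hyperplane hull_inc)
  ultimately show "convex hull X \<inter> {x. c \<bullet> x = m} = convex hull {x\<in>X. c \<bullet> x = m}"
    using S' by auto
qed

lemma cut_face: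
  fixes E :: "'v::finite \<Rightarrow> 'v \<Rightarrow> bool"
  assumes S: "S \<subseteq> Vs"
    and Y: "\<And>U. U \<subseteq> Vs \<Longrightarrow> \<forall>p\<in>Q. cut_vec E U $ p = cut_vec E S $ p \<Longrightarrow> cut_vec E U \<in> Y"
    and Ysub: "\<And>y. y \<in> Y \<Longrightarrow> \<exists>U. U \<subseteq> Vs \<and> y = cut_vec E U \<and> (\<forall>p\<in>Q. cut_vec E U $ p = cut_vec E S $ p)"
  shows "convex hull Y face_of cut_polytope Vs E"
proof -
  define X where "X = (\<lambda>S. cut_vec E S) ` Pow Vs"
  have X: "{cut_vec E S |S. S \<subseteq> Vs} = X" unfolding X_def by auto
  have fin: "finite X" unfolding X_def by (simp add: finite_subset)
  define c where "c = sgnfun E S Q"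
  define m where "m = c \<bullet> cut_vec E S"
  have le: "\<And>x. x\<in>X \<Longrightarrow> c \<bullet> x \<le> m" unfolding X_def c_def m_def using sgn_le(1) by auto
  have eq: "{x\<in>X. c \<bullet> x = m} = Y"
  proof
    show "{x\<in>X. c \<bullet> x = m} \<subseteq> Y"
    proof
      fix x assume "x \<in> {x\<in>X. c \<bullet> x = m}"
      then obtain U where U: "U \<subseteq> Vs" "x = cut_vec E U" "c \<bullet> cut_vec E U = m"
        unfolding X_def by auto
      then have "\<forall>p\<in>Q. cut_vec E U $ p = cut_vec E S $ p" unfolding c_def m_def using sgn_le(2) by blast
      then show "x \<in> Y" using Y U by blast
    qed
    show "Y \<subseteq> {x\<in>X. c \<bullet> x = m}"
    proof
      fix y assume "y \<in> Y"
      then obtain U where "U \<subseteq> Vs" "y = cut_vec E U" "\<forall>p\<in>Q. cut_vec E U $ p = cut_vec E S $ p"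
        using Ysub by blast
      moreover then have "c \<bullet> cut_vec E U = m" unfolding c_def m_def using sgn_le(2)[of E S Q U] by blast
      ultimately show "y \<in> {x\<in>X. c \<bullet> x = m}" unfolding X_def by auto
    qed
  qed
  show ?thesis using face_hull_max[OF fin le] unfolding eq cut_polytope_def X by metis
qed


theorem theorem12:
  fixes k :: nat and V :: "nat \<Rightarrow> ('v::finite) set"
  assumes "k \<ge> 2"
    and "\<And>i j. i \<in> {1..k} \<Longrightarrow> j \<in> {1..k} \<Longrightarrow> i \<noteq> j \<Longrightarrow> V i \<inter> V j = {}"
    and "\<And>i. i \<in> {1..k} \<Longrightarrow> card (V i) \<ge> 1"
    and "\<And>i. i \<in> {1..<k} \<Longrightarrow> card (V i) \<ge> card (V (Suc i))"
  shows "\<exists>C. finite C \<and>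
           skeleton_clique (cut_polytope (\<Union>i\<in>{1..k}. V i) (kpartite_edge k V)) C \<and>
           card C \<ge> 2 ^ (card (V 2) - 1)"
proof -
  define E where "E = kpartite_edge k V"
  define Vs where "Vs = (\<Union>i\<in>{1..k}. V i)"
  have k1: "1 \<in> {1..k}" "2 \<in> {1..k}" using assms(1) by auto
  have disj12: "V 1 \<inter> V 2 = {}" using assms(2)[OF k1] by auto
  have card12: "card (V 2) \<le> card (V 1)" using assms(4)[of 1] assms(1) by (simp add: numeral_2_eq_2)
  obtain f where f: "inj_on f (V 2)" "f ` V 2 \<subseteq> V 1"
    using card_le_inj[OF finite finite card12] by blast
  have "V 2 \<noteq> {}" using assms(3)[OF k1(2)] by auto
  then obtain b0 where b0: "b0 \<in> V 2" by blast
  have Eiff: "\<And>u w. E u w \<longleftrightarrow> (\<exists>i\<in>{1..k}. \<exists>j\<in>{1..k}. i\<noteq>j \<and> u\<in>V i \<and> w\<in>V j)"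
    by (simp add: E_def kpartite_edge_def)
  have EVs: "\<And>u w. E u w \<Longrightarrow> u\<in>Vs \<and> w\<in>Vs" unfolding Eiff Vs_def by blast
  have E12: "\<And>u w. u\<in>V 1 \<Longrightarrow> w\<in>V 2 \<Longrightarrow> E u w \<and> E w u"
  proof -
    fix u w assume "u\<in>V 1" "w\<in>V 2"
    moreover have "(1::nat) \<noteq> 2" "(2::nat) \<noteq> 1" by auto
    ultimately show "E u w \<and> E w u" unfolding Eiff using k1 by blast
  qed
  have E2: "\<And>u w. u\<in>Vs \<Longrightarrow> u\<notin>V 2 \<Longrightarrow> w\<in>V 2 \<Longrightarrow> E u w \<and> E w u"
  proof -
    fix u w assume "u\<in>Vs" "u\<notin>V 2" "w\<in>V 2"
    then obtain i where "i\<in>{1..k}" "u \<in> V i" "i \<noteq> 2" unfolding Vs_def by force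
    then show "E u w \<and> E w u" unfolding Eiff using k1 \<open>w\<in>V 2\<close> by metis
  qed
  have V1Vs: "V 1 \<subseteq> Vs" unfolding Vs_def using k1(1) by blast
  have V2Vs: "V 2 \<subseteq> Vs" unfolding Vs_def using k1(2) by blast
  define SA where "SA A = A \<union> f ` A" for A
  have SAVs: "\<And>A. A \<subseteq> V 2 \<Longrightarrow> SA A \<subseteq> Vs" unfolding SA_def using f V1Vs V2Vs by blast
  have memV2: "\<And>A z. A \<subseteq> V 2 \<Longrightarrow> z \<in> V 2 \<Longrightarrow> z \<in> SA A \<longleftrightarrow> z \<in> A"
    unfolding SA_def using f disj12 by blast
  have memf: "\<And>A m. A \<subseteq> V 2 \<Longrightarrow> m \<in> V 2 \<Longrightarrow> f m \<in> SA A \<longleftrightarrow> m \<in> A"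
  proof -
    fix A m assume A: "A \<subseteq> V 2" and m: "m \<in> V 2"
    have "f m \<notin> A" using f m A disj12 by blast
    moreover have "f m \<in> f ` A \<longleftrightarrow> m \<in> A" using f(1) A m by (meson inj_on_image_mem_iff)
    ultimately show "f m \<in> SA A \<longleftrightarrow> m \<in> A" unfolding SA_def by blast
  qed
  have memSA: "\<And>A z. z \<in> SA A \<Longrightarrow> z \<in> A \<or> (\<exists>m\<in>A. z = f m)" unfolding SA_def by blast
  have key: "convex hull {cut_vec E (SA A), cut_vec E (SA B)} face_of cut_polytope Vs E"
    if A: "A \<subseteq> V 2 - {b0}" and B: "B \<subseteq> V 2 - {b0}" for A B
  proof -
    define S where "S = SA A"
    define T where "T = SA B"
    define D where "D = {z. (z \<in> S) \<noteq> (z \<in> T)}"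
    define M where "M = {z. (z \<in> A) \<noteq> (z \<in> B)}"
    have A2: "A \<subseteq> V 2" and B2: "B \<subseteq> V 2" using A B by auto
    have M2: "M \<subseteq> V 2" unfolding M_def using A2 B2 by auto
    have d2: "\<And>m. m \<in> M \<Longrightarrow> m \<in> D \<and> f m \<in> D"
    proof -
      fix m assume "m \<in> M"
      then have m: "m \<in> V 2" "(m\<in>A) \<noteq> (m\<in>B)" using M2 unfolding M_def by auto
      show "m \<in> D \<and> f m \<in> D" unfolding D_def S_def T_def
        using memV2[OF A2 m(1)] memV2[OF B2 m(1)] memf[OF A2 m(1)] memf[OF B2 m(1)] m(2) by simp
    qed
    have d1: "\<And>u. u \<in> D \<Longrightarrow> (u \<in> V 2 \<and> u \<in> M) \<or> (\<exists>m\<in>M. u = f m)"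
    proof -
      fix u assume u: "u \<in> D"
      then have "u \<in> S \<or> u \<in> T" unfolding D_def by auto
      then have "u \<in> A \<union> B \<or> (\<exists>m\<in>A \<union> B. u = f m)" unfolding S_def T_def using memSA by blast
      then show "(u \<in> V 2 \<and> u \<in> M) \<or> (\<exists>m\<in>M. u = f m)"
      proof
        assume "u \<in> A \<union> B"
        then have "u \<in> V 2" using A2 B2 by auto
        then show ?thesis using u memV2[OF A2] memV2[OF B2] unfolding D_def M_def S_def T_def by auto
      next
        assume "\<exists>m\<in>A \<union> B. u = f m"
        then obtain m where m: "m \<in> A \<union> B" "u = f m" by blast
        then have "m \<in> V 2" using A2 B2 by auto
        then have "m \<in> M" using u m memf[OF A2] memf[OF B2] unfolding D_def M_def S_def T_def by auto
        then show ?thesis using m by blast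
      qed
    qed
    have b0D: "b0 \<notin> D" unfolding D_def S_def T_def using memV2[OF A2 b0] memV2[OF B2 b0] A B by auto
    have fb0D: "f b0 \<notin> D" unfolding D_def S_def T_def using memf[OF A2 b0] memf[OF B2 b0] A B by auto
    have fb01: "f b0 \<in> V 1" using f b0 by auto
    define Q where "Q = {p. E (fst p) (snd p) \<and> (fst p \<in> D \<longleftrightarrow> snd p \<in> D)}"
    have TS: "\<And>z. z \<in> T \<longleftrightarrow> (z \<in> S \<longleftrightarrow> z \<notin> D)" unfolding D_def by auto
    show ?thesis unfolding S_def[symmetric] T_def[symmetric]
    proof (rule cut_face[where S=S and Q=Q])
      show "S \<subseteq> Vs" unfolding S_def using SAVs A2 .
    next
      fix U assume UVs: "U \<subseteq> Vs" and ag: "\<forall>p\<in>Q. cut_vec E U $ p = cut_vec E S $ p"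
      define P where "P z = (z \<in> U \<longleftrightarrow> z \<in> S)" for z
      have agP: "P u = P w" if "E u w" "u \<in> D \<longleftrightarrow> w \<in> D" for u w
      proof -
        have "(u,w) \<in> Q" unfolding Q_def using that by auto
        then have "cut_vec E U $ (u,w) = cut_vec E S $ (u,w)" using ag by blast
        then show ?thesis unfolding cut_vec_agree P_def using that(1) by blast
      qed
      have outside: "P u = P b0" if "u \<in> Vs" "u \<notin> D" for u
      proof (cases "u \<in> V 2")
        case True
        have "P u = P (f b0)" using agP E12[OF fb01 True] that(2) fb0D by blast
        also have "\<dots> = P b0" using agP E12[OF fb01 b0] fb0D b0D by blast
        finally show ?thesis .
      next
        case False
        show ?thesis using agP E2[OF that(1) False b0] that(2) b0D by blast
      qed
      have MM: "P m = P (f m')" if "m \<in> M" "m' \<in> M" for m m'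
        using agP E12[of "f m'" m] d2[OF that(1)] d2[OF that(2)] M2 f that by blast
      have inside: "P u = P u'" if "u \<in> D" "u' \<in> D" for u u'
        using d1[OF that(1)] d1[OF that(2)] MM by metis
      show "cut_vec E U \<in> {cut_vec E S, cut_vec E T}"
      proof (cases "\<forall>u\<in>D. P u = P b0")
        case True
        then have all: "\<forall>u\<in>Vs. P u = P b0" using outside by blast
        have "cut_vec E U = cut_vec E S"
        proof (rule cut_vec_eq)
          fix u w assume "E u w"
          then have "P u = P w" using all EVs by metis
          then show "(u \<in> U \<longleftrightarrow> u \<in> S) \<longleftrightarrow> (w \<in> U \<longleftrightarrow> w \<in> S)" unfolding P_def .
        qed
        then show ?thesis by simp
      next
        case False
        then obtain u0 where u0: "u0 \<in> D" "P u0 \<noteq> P b0" by blast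
        have inD: "\<forall>u\<in>D. P u \<noteq> P b0" using inside u0 by metis
        have all: "(u \<in> U \<longleftrightarrow> u \<in> T) = P b0" if "u \<in> Vs" for u
        proof (cases "u \<in> D")
          case True
          then show ?thesis using inD TS[of u] unfolding P_def by blast
        next
          case False
          then show ?thesis using outside[OF that False] TS[of u] unfolding P_def by blast
        qed
        have "cut_vec E U = cut_vec E T"
        proof (rule cut_vec_eq)
          fix u w assume "E u w"
          then show "(u \<in> U \<longleftrightarrow> u \<in> T) \<longleftrightarrow> (w \<in> U \<longleftrightarrow> w \<in> T)" using all EVs by metis
        qed
        then show ?thesis by simp
      qed
    next
      fix y assume "y \<in> {cut_vec E S, cut_vec E T}"
      moreover have "\<forall>p\<in>Q. cut_vec E T $ p = cut_vec E S $ p"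
      proof
        fix p assume "p \<in> Q"
        then obtain u w where p: "p = (u,w)" "E u w" "u \<in> D \<longleftrightarrow> w \<in> D" unfolding Q_def by (metis (mono_tags, lifting) mem_Collect_eq prod.collapse)
        have "(u \<in> T \<longleftrightarrow> u \<in> S) \<longleftrightarrow> (w \<in> T \<longleftrightarrow> w \<in> S)" using TS[of u] TS[of w] p(3) by blast
        then show "cut_vec E T $ p = cut_vec E S $ p" unfolding p(1) cut_vec_agree by blast
      qed
      moreover have "S \<subseteq> Vs" "T \<subseteq> Vs" unfolding S_def T_def using SAVs A2 B2 by auto
      ultimately show "\<exists>U. U \<subseteq> Vs \<and> y = cut_vec E U \<and> (\<forall>p\<in>Q. cut_vec E U $ p = cut_vec E S $ p)"
        by auto
    qed
  qed
  have neq: "cut_vec E (SA A) \<noteq> cut_vec E (SA B)"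
    if A: "A \<subseteq> V 2 - {b0}" and B: "B \<subseteq> V 2 - {b0}" and AB: "A \<noteq> B" for A B
  proof
    assume eq: "cut_vec E (SA A) = cut_vec E (SA B)"
    have A2: "A \<subseteq> V 2" and B2: "B \<subseteq> V 2" using A B by auto
    obtain a where a: "(a \<in> A) \<noteq> (a \<in> B)" using AB by blast
    then have a2: "a \<in> V 2" using A2 B2 by auto
    have fb01: "f b0 \<in> V 1" using f b0 by auto
    have "E a (f b0)" using E12[OF fb01 a2] by blast
    moreover have "cut_vec E (SA A) $ (a, f b0) = cut_vec E (SA B) $ (a, f b0)" using eq by simp
    ultimately have "(a \<in> SA A \<longleftrightarrow> a \<in> SA B) \<longleftrightarrow> (f b0 \<in> SA A \<longleftrightarrow> f b0 \<in> SA B)"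
      unfolding cut_vec_agree by blast
    moreover have "f b0 \<notin> SA A" "f b0 \<notin> SA B" using memf[OF A2 b0] memf[OF B2 b0] A B by auto
    ultimately show False
      using memV2[OF A2 a2] memV2[OF B2 a2] a by simp
  qed
  define C where "C = (\<lambda>A. cut_vec E (SA A)) ` Pow (V 2 - {b0})"
  have inj: "inj_on (\<lambda>A. cut_vec E (SA A)) (Pow (V 2 - {b0}))"
  proof (rule inj_onI)
    fix A B assume "A \<in> Pow (V 2 - {b0})" "B \<in> Pow (V 2 - {b0})"
      "cut_vec E (SA A) = cut_vec E (SA B)"
    then show "A = B" using neq[of A B] by auto
  qed
  have cardC: "card C = 2 ^ (card (V 2) - 1)"
  proof -
    have "card C = card (Pow (V 2 - {b0}))" unfolding C_def by (rule card_image[OF inj])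
    also have "\<dots> = 2 ^ card (V 2 - {b0})" by (rule card_Pow) simp
    finally have "card C = 2 ^ card (V 2 - {b0})" .
    moreover have "card (V 2 - {b0}) = card (V 2) - 1" using b0 by (simp add: card_Diff_singleton)
    ultimately show ?thesis by simp
  qed
  have ext: "x extreme_point_of cut_polytope Vs E" if "x \<in> C" for x
  proof -
    have "x \<in> (\<lambda>A. cut_vec E (SA A)) ` Pow (V 2 - {b0})" using that unfolding C_def by blast
    then obtain A where A0: "x = cut_vec E (SA A)" "A \<in> Pow (V 2 - {b0})"
      by (rule imageE)
    then have A: "A \<subseteq> V 2 - {b0}" "x = cut_vec E (SA A)" by (simp_all only: Pow_iff)
    have "convex hull {x, x} face_of cut_polytope Vs E" unfolding A(2) by (rule key[OF A(1) A(1)])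
    then show ?thesis using face_of_singleton by (metis convex_hull_singleton insert_absorb2)
  qed
  have adj: "skeleton_adjacent (cut_polytope Vs E) x y" if "x \<in> C" "y \<in> C" "x \<noteq> y" for x y
  proof -
    have "x \<in> (\<lambda>A. cut_vec E (SA A)) ` Pow (V 2 - {b0})" using that unfolding C_def by blast
    then obtain A where A0: "x = cut_vec E (SA A)" "A \<in> Pow (V 2 - {b0})"
      by (rule imageE)
    then have A: "A \<subseteq> V 2 - {b0}" "x = cut_vec E (SA A)" by (simp_all only: Pow_iff)
    have "y \<in> (\<lambda>A. cut_vec E (SA A)) ` Pow (V 2 - {b0})" using that unfolding C_def by blast
    then obtain B where B0: "y = cut_vec E (SA B)" "B \<in> Pow (V 2 - {b0})"
      by (rule imageE)
    then have B: "B \<subseteq> V 2 - {b0}" "y = cut_vec E (SA B)" by (simp_all only: Pow_iff)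
    have F: "convex hull {x,y} face_of cut_polytope Vs E" unfolding A(2) B(2) by (rule key[OF A(1) B(1)])
    have "aff_dim (convex hull {x,y}) = 1" using that(3) by (simp add: aff_dim_convex_hull)
    moreover have "x \<in> convex hull {x,y}" "y \<in> convex hull {x,y}" by (auto intro: hull_inc)
    ultimately show ?thesis unfolding skeleton_adjacent_def using ext that F by blast
  qed
  have "finite C" unfolding C_def by simp
  moreover have "skeleton_clique (cut_polytope Vs E) C"
    unfolding skeleton_clique_def using ext adj by blast
  ultimately show ?thesis unfolding Vs_def E_def using cardC by auto
qed

end
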